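(* Let $Q=(q_n)_{n\ge1}$ be a basic sequence that is infinite in limit, and suppose there exist constants $M$ and $t$ such that $l_j\le M$ for all $j>t$. Then for every $Q$-special sequence $F$ and every real $\psi>1$, $$D_n^*(y_F)<\psi\cdot\sqrt{2M}\cdot(2M+1)\cdot n^{-1/2}$$ for all sufficiently large $n$.
   Context: A basic sequence is a sequence $Q=(q_n)_{n\ge1}$ of integers with $q_n\ge 2$; it is infinite in limit if $q_n\to\infty$. $\mathbb{N}$ denotes the positive integers. For each positive integer $j$ let $\nu_j=\min\{N : q_m\ge 2j^2 \text{ for all } m\ge N\}$. Define $l_1=\max(\nu_2-1,1)$ and, recursively for $i\ge 2$, $l_i=\max\big(\min\{k\in\mathbb{N} : l_1+2l_2+\cdots+(i-1)l_{i-1}+ik\ge \nu_{i+1}-1\},1\big)$. Put $L_i=\sum_{j=1}^i jl_j$ (with $L_0=0$). Let $S_Q=\{(a,b,c)\in\mathbb{N}^3 : b\le l_a,\ c\le a\}$ and $\phi_Q(a,b,c)=L_{a-1}+(b-1)a+c$; $\phi_Q$ is a bijection $S_Q\to\mathbb{N}$. A $Q$-special sequence is a family of integers $F=(F_{(a,b,c)})_{(a,b,c)\in S_Q}$ with $F_{(a,b,1)}=0$ for all $(a,b,1)\in S_Q$ and $\frac{F_{(a,b,c)}}{q_{\phi_Q(a,b,c)}}\in\left[\frac{c-1}{a}-\frac{1}{2a^2},\frac{c-1}{a}+\frac{1}{2a^2}\right]$ for $(a,b,c)\in S_Q$ with $c>1$. For such $F$ put $E_{F,n}=F_{\phi_Q^{-1}(n)}$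 and let $y_F$ be the sequence $\left(E_{F,n}/q_n\right)_{n=1}^\infty$. For a sequence $w=(w_1,w_2,\dots)$ in $[0,1)$, the star discrepancy is $D_n^*(w)=\sup_{0<\gamma\le1}\left|\frac{\#\{1\le k\le n: w_k\in[0,\gamma)\}}{n}-\gamma\right|$. *)

theory Defs
  imports "HOL-Analysis.Analysis"
begin

text \<open>Sequences are indexed from 1; the value at index 0 is irrelevant.\<close>

definition basic_seq :: "(nat \<Rightarrow> int) \<Rightarrow> bool" where
  "basic_seq q \<longleftrightarrow> (\<forall>n\<ge>1. q n \<ge> 2)"

definition infinite_in_limit :: "(nat \<Rightarrow> int) \<Rightarrow> bool" where
  "infinite_in_limit q \<longleftrightarrow> filterlim q at_top sequentially"

definition nu :: "(nat \<Rightarrow> int) \<Rightarrow> nat \<Rightarrow> nat" where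
  "nu q j = (LEAST N. N \<ge> 1 \<and> (\<forall>m\<ge>N. q m \<ge> 2 * int j ^ 2))"

text \<open>l_step q i Lprev computes l_i from L_{i-1} = Lprev.\<close>
definition l_step :: "(nat \<Rightarrow> int) \<Rightarrow> nat \<Rightarrow> nat \<Rightarrow> nat" where
  "l_step q i Lprev =
     (if i = 1 then max (nu q 2 - 1) 1
      else max (LEAST k. k \<ge> 1 \<and> Lprev + i * k \<ge> nu q (i + 1) - 1) 1)"

primrec LL :: "(nat \<Rightarrow> int) \<Rightarrow> nat \<Rightarrow> nat" where
  "LL q 0 = 0"
| "LL q (Suc i) = LL q i + Suc i * l_step q (Suc i) (LL q i)"

definition ll :: "(nat \<Rightarrow> int) \<Rightarrow> nat \<Rightarrow> nat" where
  "ll q i = l_step q i (LL q (i - 1))"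

definition SQ :: "(nat \<Rightarrow> int) \<Rightarrow> (nat \<times> nat \<times> nat) set" where
  "SQ q = {(a, b, c). a \<ge> 1 \<and> b \<ge> 1 \<and> c \<ge> 1 \<and> b \<le> ll q a \<and> c \<le> a}"

definition phiQ :: "(nat \<Rightarrow> int) \<Rightarrow> nat \<times> nat \<times> nat \<Rightarrow> nat" where
  "phiQ q = (\<lambda>(a, b, c). LL q (a - 1) + (b - 1) * a + c)"

definition Q_special :: "(nat \<Rightarrow> int) \<Rightarrow> (nat \<times> nat \<times> nat \<Rightarrow> int) \<Rightarrow> bool" where
  "Q_special q F \<longleftrightarrow>
     (\<forall>(a, b, c) \<in> SQ q. c = 1 \<longrightarrow> F (a, b, c) = 0) \<and>
     (\<forall>(a, b, c) \<in> SQ q. c > 1 \<longrightarrow>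
        real_of_int (F (a, b, c)) / real_of_int (q (phiQ q (a, b, c)))
          \<in> {(real c - 1) / real a - 1 / (2 * real a ^ 2) ..
             (real c - 1) / real a + 1 / (2 * real a ^ 2)})"

definition E_F :: "(nat \<Rightarrow> int) \<Rightarrow> (nat \<times> nat \<times> nat \<Rightarrow> int) \<Rightarrow> nat \<Rightarrow> int" where
  "E_F q F n = F (inv_into (SQ q) (phiQ q) n)"

definition y_F :: "(nat \<Rightarrow> int) \<Rightarrow> (nat \<times> nat \<times> nat \<Rightarrow> int) \<Rightarrow> nat \<Rightarrow> real" where
  "y_F q F n = real_of_int (E_F q F n) / real_of_int (q n)"

definition star_discrepancy :: "nat \<Rightarrow> (nat \<Rightarrow> real) \<Rightarrow> real" where
  "star_discrepancy n w =
     (SUP \<gamma> \<in> {0<..1}. \<bar>real (card {k \<in> {1..n}. w k \<in> {0..<\<gamma>}}) / real n - \<gamma>\<bar>)"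

end

theory Submission imports Defs begin

lemma ll_ge1: "ll q i \<ge> 1" by (simp add: ll_def l_step_def)

lemma LL_Suc: "LL q (Suc a) = LL q a + Suc a * ll q (Suc a)"
  by (simp add: ll_def)

lemma LL_level: "a \<ge> 1 \<Longrightarrow> LL q a = LL q (a-1) + a * ll q a"
  using LL_Suc[of q "a-1"] by simp

lemma LL_mono: "i \<le> j \<Longrightarrow> LL q i \<le> LL q j"
  by (rule lift_Suc_mono_le[of "LL q"]) auto

lemma LL_lower: "i * (i+1) \<le> 2 * LL q i"
proof (induction i)
  case (Suc i)
  have "Suc i \<le> Suc i * ll q (Suc i)" using ll_ge1[of q "Suc i"] by (metis mult_1_right mult_le_mono2)
  then have "LL q i + Suc i \<le> LL q (Suc i)" using LL_Suc[of q i] by linarith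
  note h = this
  have "Suc i * (Suc i + 1) = i * (i+1) + 2 * Suc i" by simp
  also have "\<dots> \<le> 2 * LL q i + 2 * Suc i" using Suc.IH by simp
  also have "\<dots> \<le> 2 * LL q (Suc i)" using h by simp
  finally show ?case .
qed simp

lemma phi_range:
  assumes "(a,b,c) \<in> SQ q"
  shows "LL q (a-1) < phiQ q (a,b,c) \<and> phiQ q (a,b,c) \<le> LL q a"
proof -
  from assms have a: "a \<ge> 1" "b \<ge> 1" "c \<ge> 1" "b \<le> ll q a" "c \<le> a" by (auto simp: SQ_def)
  have "(b-1)*a + c \<le> (b-1)*a + a" using a by simp
  also have "\<dots> = b * a" using a by (cases b) auto
  also have "\<dots> \<le> ll q a * a" using a by simp
  finally show ?thesis using a LL_level[of a q] by (simp add: phiQ_def mult.commute)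
qed

lemma divmod_aux: "d < (a::nat) \<Longrightarrow> (k*a + d) mod a = d" by simp
lemma divmod_aux2: "d < (a::nat) \<Longrightarrow> (k*a + d) div a = k" by simp

lemma phi_inj_aux:
  assumes x: "(a,b,c) \<in> SQ q" and x': "(a',b',c') \<in> SQ q" and eq: "phiQ q (a,b,c) = phiQ q (a',b',c')"
  shows "a = a' \<and> b = b' \<and> c = c'"
proof -
  have aa: "a = a'"
  proof (rule ccontr)
    assume "a \<noteq> a'"
    then consider "a < a'" | "a' < a" by linarith
    then show False
    proof cases
      case 1
      then have "LL q a \<le> LL q (a'-1)" by (intro LL_mono) simp
      then show False using phi_range[OF x] phi_range[OF x'] eq by linarith
    next
      case 2
      then have "LL q a' \<le> LL q (a-1)" by (intro LL_mono) simp
      then show False using phi_range[OF x] phi_range[OF x'] eq by linarith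
    qed
  qed
  from x x' have a: "a \<ge> 1" "b \<ge> 1" "c \<ge> 1" "c \<le> a" "b' \<ge> 1" "c' \<ge> 1" "c' \<le> a" 
    by (auto simp: SQ_def aa)
  from eq aa have e: "(b-1)*a + (c-1) = (b'-1)*a + (c'-1)" using a by (simp add: phiQ_def)
  have "((b-1)*a + (c-1)) mod a = c - 1" using a by (intro divmod_aux) auto
  moreover have "((b'-1)*a + (c'-1)) mod a = c' - 1" using a by (intro divmod_aux) auto
  ultimately have cc: "c = c'" using e a by simp
  have "((b-1)*a + (c-1)) div a = b - 1" using a by (intro divmod_aux2) auto
  moreover have "((b'-1)*a + (c'-1)) div a = b' - 1" using a by (intro divmod_aux2) auto
  ultimately have "b = b'" using e a by simp
  then show "a = a' \<and> b = b' \<and> c = c'" using aa cc by simp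
qed

lemma phi_inj: "inj_on (phiQ q) (SQ q)"
  by (rule inj_onI) (metis phi_inj_aux prod_cases3)

lemma y_at_phi:
  assumes "(a,b,c) \<in> SQ q"
  shows "y_F q F (phiQ q (a,b,c)) = real_of_int (F (a,b,c)) / real_of_int (q (phiQ q (a,b,c)))"
  using inv_into_f_f[OF phi_inj assms] by (simp add: y_F_def E_F_def)

lemma card_lt_upper:
  fixes x :: real assumes "x \<ge> 0"
  shows "real (card {c\<in>{1..a::nat}. real c - 1 < x}) \<le> x + 1"
proof -
  have "{c\<in>{1..a::nat}. real c - 1 < x} \<subseteq> {1..nat \<lceil>x\<rceil>}"
  proof
    fix c assume "c \<in> {c\<in>{1..a::nat}. real c - 1 < x}"
    then have "real c - 1 < x" "c \<ge> 1" by auto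
    then have "real c - 1 < real_of_int \<lceil>x\<rceil>" using le_of_int_ceiling[of x] by linarith
    then have "int c - 1 < \<lceil>x\<rceil>" by linarith
    then show "c \<in> {1..nat \<lceil>x\<rceil>}" using \<open>c \<ge> 1\<close> by auto
  qed
  then have "card {c\<in>{1..a::nat}. real c - 1 < x} \<le> nat \<lceil>x\<rceil>"
    using card_mono[of "{1..nat \<lceil>x\<rceil>}"] by fastforce
  then have "real (card {c\<in>{1..a::nat}. real c - 1 < x}) \<le> real (nat \<lceil>x\<rceil>)" by simp
  also have "\<dots> \<le> x + 1" using assms ceiling_less_cancel[of x] by (simp add: ceiling_correct less_imp_le)
  finally show ?thesis .
qed

lemma card_lt_lower:
  fixes x :: real
  shows "min (real a) x \<le> real (card {c\<in>{1..a::nat}. real c - 1 < x})"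
proof (cases "x \<ge> 0")
  case True
  have "{1..min a (nat \<lceil>x\<rceil>)} \<subseteq> {c\<in>{1..a::nat}. real c - 1 < x}"
  proof
    fix c assume "c \<in> {1..min a (nat \<lceil>x\<rceil>)}"
    then have "c \<ge> 1" "c \<le> a" "int c \<le> \<lceil>x\<rceil>" by auto
    then have "real c - 1 < x" using ceiling_less_iff[of x "int c"] by linarith
    then show "c \<in> {c\<in>{1..a::nat}. real c - 1 < x}" using \<open>c\<ge>1\<close> \<open>c\<le>a\<close> by auto
  qed
  then have "card {1..min a (nat \<lceil>x\<rceil>)} \<le> card {c\<in>{1..a::nat}. real c - 1 < x}"
    by (intro card_mono) auto
  then have "min a (nat \<lceil>x\<rceil>) \<le> card {c\<in>{1..a::nat}. real c - 1 < x}" by simp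
  then have "real (min a (nat \<lceil>x\<rceil>)) \<le> real (card {c\<in>{1..a::nat}. real c - 1 < x})" by linarith
  moreover have "x \<le> real (nat \<lceil>x\<rceil>)" using True le_of_int_ceiling[of x] by linarith
  then have "min (real a) x \<le> real (min a (nat \<lceil>x\<rceil>))"
    by (cases "a \<le> nat \<lceil>x\<rceil>") (auto simp: min_def)
  ultimately show ?thesis by linarith
next
  case False
  then show ?thesis by (simp add: min_def)
qed


lemma sum_ind: "finite A \<Longrightarrow> (\<Sum>x\<in>A. if P x then 1 else 0 :: real) = real (card {x\<in>A. P x})"
  by (simp add: sum.If_cases Int_def)

definition gg :: "(nat \<Rightarrow> int) \<Rightarrow> (nat\<times>nat\<times>nat \<Rightarrow> int) \<Rightarrow> real \<Rightarrow> nat \<Rightarrow> real" where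
  "gg q F \<gamma> k = (if y_F q F k \<in> {0..<\<gamma>} then 1 else 0) - \<gamma>"

definition GG :: "(nat \<Rightarrow> int) \<Rightarrow> (nat\<times>nat\<times>nat \<Rightarrow> int) \<Rightarrow> real \<Rightarrow> nat \<Rightarrow> real" where
  "GG q F \<gamma> n = (\<Sum>k\<in>{1..n}. gg q F \<gamma> k)"

lemma GG_shift: "GG q F \<gamma> (s+m) - GG q F \<gamma> s = (\<Sum>c\<in>{1..m}. gg q F \<gamma> (s+c))"
  by (induction m) (auto simp: GG_def)

lemma GG_0: "GG q F \<gamma> 0 = 0" by (simp add: GG_def)

lemma gg_abs: "0 < \<gamma> \<Longrightarrow> \<gamma> \<le> 1 \<Longrightarrow> \<bar>gg q F \<gamma> k\<bar> \<le> 1"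
  by (simp add: gg_def)

lemma GG_partial:
  assumes "0 < \<gamma>" "\<gamma> \<le> 1"
  shows "\<bar>GG q F \<gamma> (s+m) - GG q F \<gamma> s\<bar> \<le> real m"
proof -
  have "\<bar>GG q F \<gamma> (s+m) - GG q F \<gamma> s\<bar> \<le> (\<Sum>c\<in>{1..m}. \<bar>gg q F \<gamma> (s+c)\<bar>)"
    unfolding GG_shift by (rule sum_abs)
  also have "\<dots> \<le> real (card {1..m}) * 1"
    by (rule sum_bounded_above) (use gg_abs[OF assms] in auto)
  finally show ?thesis by simp
qed

lemma GG_count:
  "GG q F \<gamma> n = real (card {k\<in>{1..n}. y_F q F k \<in> {0..<\<gamma>}}) - real n * \<gamma>"
  by (simp add: GG_def gg_def sum_subtractf sum_ind)

lemma block: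
  assumes basic: "basic_seq q" and QS: "Q_special q F" and g: "0 < \<gamma>" "\<gamma> \<le> 1"
    and a: "a \<ge> 1" "b \<ge> 1" "b \<le> ll q a" and s: "s = LL q (a-1) + (b-1)*a"
  shows "\<bar>GG q F \<gamma> (s+a) - GG q F \<gamma> s\<bar> \<le> 2"
proof -
  define y where "y c = y_F q F (s+c)" for c
  have SQc: "(a,b,c) \<in> SQ q" if "c \<in> {1..a}" for c using that a by (auto simp: SQ_def)
  have phic: "phiQ q (a,b,c) = s + c" for c using s by (simp add: phiQ_def)
  have qpos: "real_of_int (q (s+c)) > 0" if "c \<in> {1..a}" for c
  proof -
    have "s + c \<ge> 1" using that by simp
    then have "q (s+c) \<ge> 2" using basic by (simp add: basic_seq_def)
    then show ?thesis by simp
  qed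
  have yc: "y c = real_of_int (F (a,b,c)) / real_of_int (q (s+c))" if "c \<in> {1..a}" for c
    using y_at_phi[OF SQc[OF that], of F] unfolding phic y_def .
  have y1: "y 1 = 0"
  proof -
    have "F (a,b,1) = 0" using QS SQc[of 1] a unfolding Q_special_def by auto
    then show ?thesis using yc[of 1] a by simp
  qed
  have yb: "y c \<in> {(real c - 1) / real a - 1 / (2 * real a ^ 2) .. (real c - 1) / real a + 1 / (2 * real a ^ 2)}"
    if "c \<in> {1..a}" "c > 1" for c
  proof -
    have "real_of_int (F (a,b,c)) / real_of_int (q (phiQ q (a,b,c))) \<in> {(real c - 1) / real a - 1 / (2 * real a ^ 2) .. (real c - 1) / real a + 1 / (2 * real a ^ 2)}"
      using QS SQc[OF that(1)] that(2) unfolding Q_special_def by fast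
    then show ?thesis unfolding yc[OF that(1)] phic .
  qed
  define P where "P c \<longleftrightarrow> y c \<in> {0..<\<gamma>}" for c
  have sum_eq: "GG q F \<gamma> (s+a) - GG q F \<gamma> s = real (card {c\<in>{1..a}. P c}) - real a * \<gamma>"
    unfolding GG_shift by (simp add: gg_def sum_subtractf sum_ind P_def y_def)
  define xl where "xl = real a * \<gamma> - 1 / (2 * real a)"
  define xh where "xh = real a * \<gamma> + 1 / (2 * real a)"
  have ra: "real a \<ge> 1" using a by simp
  have sub1: "{c\<in>{1..a}. real c - 1 < xl} \<subseteq> {c\<in>{1..a}. P c}"
  proof clarify
    fix c assume c: "c \<in> {1..a}" "real c - 1 < xl"
    show "P c"
    proof (cases "c = 1")
      case True then show ?thesis using y1 g by (simp add: P_def)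
    next
      case False
      then have c1: "c > 1" using c by simp
      have "(real c - 1) / real a < xl / real a" using c(2) ra by (simp add: divide_strict_right_mono)
      moreover have "xl / real a = \<gamma> - 1 / (2 * real a ^ 2)"
        using ra unfolding xl_def by (simp add: field_simps power2_eq_square)
      ultimately have "(real c - 1) / real a < \<gamma> - 1 / (2 * real a ^ 2)" by simp
      moreover have "1 / (2 * real a ^ 2) \<le> (real c - 1) / real a"
      proof -
        have "real a * 1 \<le> real a * (2 * real a)" using ra by (intro mult_left_mono) auto
        then have "real a \<le> 2 * real a ^ 2" by (simp add: power2_eq_square)
        then have "1 / (2 * real a ^ 2) \<le> 1 / real a" using ra by (intro divide_left_mono) auto
        also have "\<dots> \<le> (real c - 1) / real a" using c1 ra by (intro divide_right_mono) auto
        finally show ?thesis .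
      qed
      ultimately show ?thesis using yb[OF c(1) c1] by (simp add: P_def)
    qed
  qed
  have sub2: "{c\<in>{1..a}. P c} \<subseteq> {c\<in>{1..a}. real c - 1 < xh}"
  proof clarify
    fix c assume c: "c \<in> {1..a}" "P c"
    show "real c - 1 < xh"
    proof (cases "c = 1")
      case True
      have p1: "0 < real a * \<gamma>" using g ra by simp
      have p2: "0 < 1 / (2 * real a)" using ra by simp
      have "real c - 1 = 0" using True by simp
      then show ?thesis unfolding xh_def using p1 p2 by linarith
    next
      case False
      then have c1: "c > 1" using c by simp
      have "(real c - 1) / real a - 1 / (2 * real a ^ 2) < \<gamma>"
        using yb[OF c(1) c1] c(2) by (simp add: P_def)
      then have "(real c - 1) / real a * real a < (\<gamma> + 1 / (2 * real a ^ 2)) * real a"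
        using ra by (intro mult_strict_right_mono) auto
      moreover have "(real c - 1) / real a * real a = real c - 1" using ra by simp
      moreover have "(\<gamma> + 1 / (2 * real a ^ 2)) * real a = xh"
        using ra unfolding xh_def by (simp add: field_simps power2_eq_square)
      ultimately show ?thesis by simp
    qed
  qed
  have "card {c\<in>{1..a}. real c - 1 < xl} \<le> card {c\<in>{1..a}. P c}"
    by (rule card_mono[OF _ sub1]) simp
  then have "real (card {c\<in>{1..a}. P c}) \<ge> min (real a) xl"
    using card_lt_lower[of a xl] by linarith
  moreover have "min (real a) xl = xl"
  proof -
    have "real a * \<gamma> \<le> real a" using g ra by (intro mult_left_le) auto
    moreover have "0 \<le> 1 / (2 * real a)" by simp
    ultimately show ?thesis unfolding xl_def by linarith
  qed
  moreover have "real (card {c\<in>{1..a}. P c}) \<le> xh + 1"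
  proof -
    have "xh \<ge> 0" using g ra unfolding xh_def by simp
    moreover have "card {c\<in>{1..a}. P c} \<le> card {c\<in>{1..a}. real c - 1 < xh}"
      by (rule card_mono[OF _ sub2]) simp
    ultimately show ?thesis using card_lt_upper[of xh a] by linarith
  qed
  moreover have "1 / (2 * real a) \<le> 1" using ra by simp
  ultimately show ?thesis unfolding sum_eq xl_def xh_def by linarith
qed


lemma level_bound:
  assumes basic: "basic_seq q" and QS: "Q_special q F" and g: "0 < \<gamma>" "\<gamma> \<le> 1"
    and a: "a \<ge> 1"
  shows "b \<le> ll q a \<Longrightarrow> \<bar>GG q F \<gamma> (LL q (a-1) + b*a) - GG q F \<gamma> (LL q (a-1))\<bar> \<le> 2 * real b"
proof (induction b)
  case 0 then show ?case by simp
next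
  case (Suc b)
  define s where "s = LL q (a-1) + (Suc b - 1)*a"
  have bl: "\<bar>GG q F \<gamma> (s+a) - GG q F \<gamma> s\<bar> \<le> 2"
    by (rule block[OF basic QS g a _ Suc.prems s_def]) simp
  have e1: "s = LL q (a-1) + b*a" by (simp add: s_def)
  have e2: "LL q (a-1) + Suc b * a = s + a" by (simp add: s_def)
  have ih: "\<bar>GG q F \<gamma> s - GG q F \<gamma> (LL q (a-1))\<bar> \<le> 2 * real b"
    using Suc.IH Suc.prems e1 by simp
  show ?case unfolding e2 using bl ih by simp
qed

lemma full_bound:
  assumes basic: "basic_seq q" and QS: "Q_special q F" and g: "0 < \<gamma>" "\<gamma> \<le> 1"
  shows "\<bar>GG q F \<gamma> (LL q a)\<bar> \<le> 2 * (\<Sum>j\<in>{1..a}. real (ll q j))"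
proof (induction a)
  case 0 then show ?case by (simp add: GG_0)
next
  case (Suc a)
  have lv: "\<bar>GG q F \<gamma> (LL q (Suc a - 1) + ll q (Suc a) * Suc a) - GG q F \<gamma> (LL q (Suc a - 1))\<bar>
      \<le> 2 * real (ll q (Suc a))"
    by (rule level_bound[OF basic QS g]) auto
  have e: "LL q (Suc a) = LL q a + ll q (Suc a) * Suc a" using LL_Suc[of q a] by simp
  show ?case unfolding e using lv Suc.IH by simp
qed

lemma sum_split_last: "(a::nat) \<ge> 1 \<Longrightarrow> (\<Sum>j\<in>{1..a}. f j) = (\<Sum>j\<in>{1..a-1}. f j) + (f a :: real)"
proof -
  assume "a \<ge> 1"
  then obtain k where "a = Suc k" by (cases a) auto
  then show ?thesis by simp
qed

lemma tri3: "\<bar>z\<bar> \<le> \<bar>x\<bar> + \<bar>y - x\<bar> + \<bar>z - y::real\<bar>"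
  using abs_triangle_ineq[of x "y - x"] abs_triangle_ineq[of "x + (y - x)" "z - y"] by simp

lemma n_bound:
  assumes basic: "basic_seq q" and QS: "Q_special q F" and g: "0 < \<gamma>" "\<gamma> \<le> 1"
    and a: "a \<ge> 1" and n: "LL q (a-1) < n" "n \<le> LL q a"
  shows "\<bar>GG q F \<gamma> n\<bar> \<le> 2 * (\<Sum>j\<in>{1..a}. real (ll q j)) + real a"
proof -
  define r where "r = n - LL q (a-1)"
  define b where "b = r div a"
  define m where "m = r mod a"
  have nr: "n = LL q (a-1) + b*a + m" using n unfolding r_def b_def m_def by simp
  have "r \<le> a * ll q a" using n LL_level[OF a, of q] unfolding r_def by simp
  then have "b * a \<le> ll q a * a" unfolding b_def
    by (metis div_times_less_eq_dividend mult.commute order_trans)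
  then have bl: "b \<le> ll q a" using a by simp
  have ml: "m < a" using a unfolding m_def by simp
  have h1: "\<bar>GG q F \<gamma> (LL q (a-1))\<bar> \<le> 2 * (\<Sum>j\<in>{1..a-1}. real (ll q j))"
    by (rule full_bound[OF basic QS g])
  have h2: "\<bar>GG q F \<gamma> (LL q (a-1) + b*a) - GG q F \<gamma> (LL q (a-1))\<bar> \<le> 2 * real b"
    by (rule level_bound[OF basic QS g a bl])
  have h3: "\<bar>GG q F \<gamma> (LL q (a-1) + b*a + m) - GG q F \<gamma> (LL q (a-1) + b*a)\<bar> \<le> real m"
    by (rule GG_partial[OF g])
  have "real b \<le> real (ll q a)" using bl by simp
  have "real m \<le> real a" using ml by simp
  have "\<bar>GG q F \<gamma> n\<bar> \<le> \<bar>GG q F \<gamma> (LL q (a-1))\<bar>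
     + \<bar>GG q F \<gamma> (LL q (a-1) + b*a) - GG q F \<gamma> (LL q (a-1))\<bar>
     + \<bar>GG q F \<gamma> (LL q (a-1) + b*a + m) - GG q F \<gamma> (LL q (a-1) + b*a)\<bar>"
    unfolding nr by (rule tri3)
  also have "\<dots> \<le> 2 * (\<Sum>j\<in>{1..a-1}. real (ll q j)) + 2 * real b + real m"
    by (intro add_mono h1 h2 h3)
  also have "\<dots> \<le> 2 * (\<Sum>j\<in>{1..a}. real (ll q j)) + real a"
  proof -
    have gen: "\<And>S::real. 2*S + 2*real b + real m \<le> 2*(S + real (ll q a)) + real a"
      using \<open>real b \<le> real (ll q a)\<close> \<open>real m \<le> real a\<close> by (smt (verit))
    show ?thesis unfolding sum_split_last[OF a] by (rule gen)
  qed
  finally show ?thesis .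
qed

lemma level_exists:
  assumes "n \<ge> 1" shows "\<exists>a\<ge>1. LL q (a-1) < n \<and> n \<le> LL q a"
proof -
  have "n * 2 \<le> n * (n+1)" using assms by (intro mult_le_mono2) simp
  then have "n \<le> LL q n" using LL_lower[of n q] by linarith
  then have ex: "\<exists>a. n \<le> LL q a" by blast
  define a where "a = (LEAST a. n \<le> LL q a)"
  have na: "n \<le> LL q a" unfolding a_def by (rule LeastI_ex[OF ex])
  have a1: "a \<ge> 1" using na assms by (cases a) auto
  have "a - 1 < a" using a1 by simp
  then have "\<not> n \<le> LL q (a-1)"
    using not_less_Least[of "a-1" "\<lambda>a. n \<le> LL q a"] unfolding a_def by simp
  then show ?thesis using a1 na by auto
qed

lemma a_bound:
  assumes a: "a \<ge> 1" and n: "LL q (a-1) < n"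
  shows "real a < sqrt (2 * real n) + 1"
proof -
  have "(a-1)*(a-1+1) \<le> 2 * LL q (a-1)" by (rule LL_lower)
  moreover have "(a-1)*(a-1) \<le> (a-1)*(a-1+1)" by (intro mult_le_mono2) simp
  ultimately have "(a-1)*(a-1) < 2 * n" using n by linarith
  then have "real ((a-1)*(a-1)) < real (2 * n)" by (simp only: of_nat_less_iff)
  then have "real (a-1) ^ 2 < 2 * real n" by (simp add: power2_eq_square)
  then have "real (a-1) < sqrt (2 * real n)" by (rule real_less_rsqrt)
  then show ?thesis using a by simp
qed

lemma M_ge1:
  assumes M: "\<forall>j>t. real (ll q j) \<le> M"
  shows "M \<ge> 1"
proof -
  have "real (ll q (Suc t)) \<le> M" using M by simp
  moreover have "1 \<le> real (ll q (Suc t))" using ll_ge1[of q "Suc t"] by simp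
  ultimately show ?thesis by linarith
qed

lemma sum_ll_bound:
  assumes M: "\<forall>j>t. real (ll q j) \<le> M"
  shows "(\<Sum>j\<in>{1..a}. real (ll q j)) \<le> (\<Sum>j\<in>{1..t}. real (ll q j)) + real a * M"
proof -
  have M0: "M \<ge> 0" using M_ge1[OF M] by simp
  have e: "(\<Sum>j\<in>{1..a}. real (ll q j)) = (\<Sum>j\<in>{1..a} \<inter> {..t}. real (ll q j)) + (\<Sum>j\<in>{1..a} - {..t}. real (ll q j))"
    by (rule sum.Int_Diff) simp
  have i1: "(\<Sum>j\<in>{1..a} \<inter> {..t}. real (ll q j)) \<le> (\<Sum>j\<in>{1..t}. real (ll q j))"
    by (rule sum_mono2) auto
  have i2: "(\<Sum>j\<in>{1..a} - {..t}. real (ll q j)) \<le> real (card ({1..a} - {..t})) * M"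
    by (rule sum_bounded_above) (use M in auto)
  have "card ({1..a} - {..t}) \<le> card {1..a}" by (rule card_mono) auto
  then have i3: "real (card ({1..a} - {..t})) * M \<le> real a * M" using M0 by (intro mult_right_mono) auto
  show ?thesis unfolding e using i1 i2 i3 by linarith
qed

lemma powr_half: "n > 0 \<Longrightarrow> real n powr (-1/2) = 1 / sqrt (real n)"
proof -
  assume "n > 0"
  have "real n powr (-1/2) = real n powr (- (1/2))" by simp
  also have "\<dots> = 1 / real n powr (1/2)" by (rule powr_minus_divide)
  also have "real n powr (1/2) = sqrt (real n)" by (rule powr_half_sqrt) simp
  finally show ?thesis .
qed


lemma disc_bound:
  assumes basic: "basic_seq q" and QS: "Q_special q F" and M: "\<forall>j>t. real (ll q j) \<le> M"
    and n: "n \<ge> 1"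
  shows "star_discrepancy n (y_F q F) \<le>
     (2 * (\<Sum>j\<in>{1..t}. real (ll q j)) + (2*M+1) * (sqrt (2 * real n) + 1)) / real n"
proof -
  define S where "S = (\<Sum>j\<in>{1..t}. real (ll q j))"
  define B where "B = 2 * S + (2*M+1) * (sqrt (2 * real n) + 1)"
  have M1: "M \<ge> 1" by (rule M_ge1[OF M])
  obtain a where a: "a \<ge> 1" "LL q (a-1) < n" "n \<le> LL q a" using level_exists[OF n] by blast
  have ab: "real a < sqrt (2 * real n) + 1" by (rule a_bound[OF a(1,2)])
  have sb: "(\<Sum>j\<in>{1..a}. real (ll q j)) \<le> S + real a * M" unfolding S_def by (rule sum_ll_bound[OF M])
  have np: "real n > 0" using n by simp
  have "\<bar>real (card {k\<in>{1..n}. y_F q F k \<in> {0..<\<gamma>}}) / real n - \<gamma>\<bar> \<le> B / real n"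
    if g: "\<gamma> \<in> {0<..1}" for \<gamma>
  proof -
    have g': "0 < \<gamma>" "\<gamma> \<le> 1" using g by auto
    have "real (card {k\<in>{1..n}. y_F q F k \<in> {0..<\<gamma>}}) / real n - \<gamma> = GG q F \<gamma> n / real n"
      unfolding GG_count using np by (simp add: field_simps)
    then have e: "\<bar>real (card {k\<in>{1..n}. y_F q F k \<in> {0..<\<gamma>}}) / real n - \<gamma>\<bar> = \<bar>GG q F \<gamma> n\<bar> / real n"
      using np by simp
    have "\<bar>GG q F \<gamma> n\<bar> \<le> 2 * (\<Sum>j\<in>{1..a}. real (ll q j)) + real a"
      by (rule n_bound[OF basic QS g' a])
    also have "\<dots> \<le> 2 * S + (2*M+1) * real a" using sb by (simp add: algebra_simps)
    also have "\<dots> \<le> B" unfolding B_def using ab M1 by (intro add_left_mono mult_left_mono) auto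
    finally show ?thesis unfolding e using np by (intro divide_right_mono) auto
  qed
  then have "star_discrepancy n (y_F q F) \<le> B / real n"
    unfolding star_discrepancy_def by (intro cSUP_least) auto
  then show ?thesis unfolding B_def S_def .
qed

theorem mainTheorem11:
  fixes q :: "nat \<Rightarrow> int" and M :: real and t :: nat
  assumes "basic_seq q" and "infinite_in_limit q"
    and "\<forall>j>t. real (ll q j) \<le> M"
  shows "\<forall>F. Q_special q F \<longrightarrow> (\<forall>\<psi>::real. \<psi> > 1 \<longrightarrow>
           (\<forall>\<^sub>F n in sequentially.
              star_discrepancy n (y_F q F) < \<psi> * sqrt (2 * M) * (2 * M + 1) * real n powr (-1/2)))"
proof (intro allI impI)
  fix F and \<psi> :: real
  assume QS: "Q_special q F" and psi: "\<psi> > 1"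
  define S where "S = (\<Sum>j\<in>{1..t}. real (ll q j))"
  define C where "C = \<bar>2 * S + 2 * M + 1\<bar>"
  have M1: "M \<ge> 1" by (rule M_ge1[OF assms(3)])
  define c where "c = (\<psi> - 1) * (2 * M + 1)"
  have cpos: "c > 0" unfolding c_def using psi M1 by simp
  have lim: "filterlim (\<lambda>n. sqrt (real n)) at_top sequentially"
    by (rule filterlim_compose[OF sqrt_at_top filterlim_real_sequentially])
  have ev1: "\<forall>\<^sub>F n in sequentially. C / c < sqrt (real n)"
    using lim unfolding filterlim_at_top_dense by blast
  have ev2: "\<forall>\<^sub>F n in sequentially. n \<ge> 1" by (rule eventually_ge_at_top)
  show "\<forall>\<^sub>F n in sequentially.
          star_discrepancy n (y_F q F) < \<psi> * sqrt (2 * M) * (2 * M + 1) * real n powr (-1/2)"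
    using ev1 ev2
  proof eventually_elim
    case (elim n)
    have np: "real n > 0" using elim by simp
    have sn: "sqrt (real n) > 0" using np by simp
    have s2n: "sqrt (2 * real n) = sqrt 2 * sqrt (real n)" by (simp add: real_sqrt_mult)
    have s2M: "sqrt 2 \<le> sqrt (2 * M)" using M1 by simp
    have "C < c * sqrt (real n)" using elim(1) cpos by (simp add: field_simps)
    also have "\<dots> \<le> c * sqrt (2 * real n)" using cpos np by (intro mult_left_mono) auto
    finally have h1: "2 * S + 2 * M + 1 < (\<psi> - 1) * (2 * M + 1) * sqrt (2 * real n)"
      unfolding C_def c_def by linarith
    have "2 * S + (2*M+1) * (sqrt (2 * real n) + 1) < \<psi> * (2 * M + 1) * sqrt (2 * real n)"
      using h1 by (simp add: algebra_simps)
    also have "\<dots> = \<psi> * sqrt 2 * (2 * M + 1) * sqrt (real n)" unfolding s2n by simp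
    also have "\<dots> \<le> \<psi> * sqrt (2 * M) * (2 * M + 1) * sqrt (real n)"
      using s2M psi M1 sn by (intro mult_right_mono) auto
    finally have h2: "2 * S + (2*M+1) * (sqrt (2 * real n) + 1) < \<psi> * sqrt (2 * M) * (2 * M + 1) * sqrt (real n)" .
    have "star_discrepancy n (y_F q F) \<le> (2 * S + (2*M+1) * (sqrt (2 * real n) + 1)) / real n"
      unfolding S_def by (rule disc_bound[OF assms(1) QS assms(3) elim(2)])
    also have "\<dots> < \<psi> * sqrt (2 * M) * (2 * M + 1) * sqrt (real n) / real n"
      using h2 np by (intro divide_strict_right_mono) auto
    also have "\<dots> = \<psi> * sqrt (2 * M) * (2 * M + 1) * real n powr (-1/2)"
    proof -
      have nn: "sqrt (real n) * sqrt (real n) = real n" using np by simp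
      have s1: "sqrt (real n) / real n = 1 / sqrt (real n)"
        using sn by (subst nn[symmetric]) (simp add: field_simps)
      have s2: "real n powr (-1/2) = 1 / sqrt (real n)" using np by (intro powr_half) simp
      have s3: "\<psi> * sqrt (2 * M) * (2 * M + 1) * sqrt (real n) / real n
          = \<psi> * sqrt (2 * M) * (2 * M + 1) * (sqrt (real n) / real n)"
        by (rule times_divide_eq_right[symmetric])
      show ?thesis by (simp only: s3 s1 s2)
    qed
    finally show ?case .
  qed
qed

end
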